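(* Let $0<a\le1$. Then: (1) $\Phi_2(\sigma_1,\sigma_2,a,1,1)>0$ for $\sigma_1>0$, $\sigma_2>1$, $\sigma_1+\sigma_2>2$. (2) If $z_2\in[-1,1)$, $z_2\ne0$, then $\Phi_2(\sigma_1,\sigma_2,a,1,z_2)>0$ for $\sigma_1>1$, $\sigma_2>0$. (3) If $z_1\in[-1,1)$, $z_1\ne0$, then $\Phi_2(\sigma_1,\sigma_2,a,z_1,1)>0$ for $\sigma_1>0$, $\sigma_2>1$. (4) If $z_1,z_2\in[-1,1)$, both nonzero, then $\Phi_2(\sigma_1,\sigma_2,a,z_1,z_2)>0$ for $\sigma_1>0$, $\sigma_2>0$.
   Context: For $0<a\le1$, $s_1,s_2\in\mathbb{C}$ and $z_1,z_2\in\mathbb{C}$ with $0<|z_1|,|z_2|\le1$, the Hurwitz–Lerch type Euler–Zagier double zeta function is $$\Phi_2(s_1,s_2,a,z_1,z_2):=\sum_{m=0}^\infty\frac{z_1^m}{(m+a)^{s_1}}\sum_{n=1}^\infty\frac{z_2^{n-1}}{(m+n+a)^{s_2}},$$ convergent absolutely for $\Re s_1>0$, $\Re s_2>1$, $\Re(s_1+s_2)>2$, and understood elsewhere via its meromorphic continuation to $\mathbb{C}^2$. *)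

theory Defs
  imports "HOL-Analysis.Analysis"
begin

text \<open>Hurwitz--Lerch type Euler--Zagier double zeta function, given by its defining
  iterated series  sum_{m>=0} z1^m/(m+a)^s1 * sum_{n>=1} z2^(n-1)/(m+n+a)^s2 .
  The inner index is shifted (n-1 replaced by n, n ranging over nat from 0).
  Powers (m+a)^s are principal complex powers of positive reals.\<close>
definition Phi2 :: "complex \<Rightarrow> complex \<Rightarrow> real \<Rightarrow> complex \<Rightarrow> complex \<Rightarrow> complex" where
  "Phi2 s1 s2 a z1 z2 =
     (\<Sum>m. z1 ^ m / (of_nat m + of_real a) powr s1 *
        (\<Sum>n. z2 ^ n / (of_nat m + of_nat n + 1 + of_real a) powr s2))"

definition pos_real :: "complex \<Rightarrow> bool" where
  "pos_real w \<longleftrightarrow> Im w = 0 \<and> Re w > 0"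

end

theory Submission
  imports Defs
begin


lemma lim_powr0:
  fixes c s :: real assumes "s > 0"
  shows "(\<lambda>n::nat. (real n + c) powr (-s)) \<longlonglongrightarrow> 0"
proof (rule tendsto_neg_powr)
  show "- s < 0" using assms by simp
  show "filterlim (\<lambda>n::nat. real n + c) at_top sequentially" using filterlim_tendsto_add_at_top[OF tendsto_const filterlim_real_sequentially, of c] by (simp add: add.commute)
qed

lemma geomalt:
  fixes z :: real and b :: "nat \<Rightarrow> real"
  assumes z: "-1 \<le> z" "z < 1" and bp: "\<And>n. 0 \<le> b n" and bm: "\<And>n. b (Suc n) \<le> b n"
    and bl: "b \<longlonglongrightarrow> 0"
  shows "summable (\<lambda>n. z^n * b n)" "0 \<le> (\<Sum>n. z^n * b n)"
    "(\<Sum>n. z^n * b n) \<le> b 0 / (1 - max z 0)"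
    "b 1 < b 0 \<Longrightarrow> 0 < (\<Sum>n. z^n * b n)"
proof -
  have "summable (\<lambda>n. z^n * b n) \<and> 0 \<le> (\<Sum>n. z^n * b n) \<and>
    (\<Sum>n. z^n * b n) \<le> b 0 / (1 - max z 0) \<and> (b 1 < b 0 \<longrightarrow> 0 < (\<Sum>n. z^n * b n))"
  proof (cases "z \<ge> 0")
    case True
    have bb: "b n \<le> b 0" for n
      by (induction n) (auto intro: order_trans[OF bm])
    have g: "summable (\<lambda>n. b 0 * z^n)"
      using True z by (intro summable_mult summable_geometric) auto
    have le: "norm (z^n * b n) \<le> b 0 * z^n" for n
      using True bp[of n] bb[of n] by (simp add: abs_mult mult.commute mult_right_mono)
    have s: "summable (\<lambda>n. z^n * b n)"
      by (rule summable_comparison_test[OF _ g]) (use le in auto)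
    have nn: "0 \<le> z^n * b n" for n using True bp[of n] by simp
    have "(\<Sum>n. z^n * b n) \<le> (\<Sum>n. b 0 * z^n)"
      by (rule suminf_le) (use le nn s g in \<open>auto\<close>)
    also have "\<dots> = b 0 / (1 - max z 0)"
      using True z by (simp add: suminf_mult suminf_geometric divide_simps)
    finally have u: "(\<Sum>n. z^n * b n) \<le> b 0 / (1 - max z 0)" .
    have "b 1 < b 0 \<longrightarrow> 0 < (\<Sum>n. z^n * b n)"
    proof
      assume "b 1 < b 0"
      then have "0 < z^0 * b 0" using bp[of 1] by simp
      then show "0 < (\<Sum>n. z^n * b n)" by (rule suminf_pos2[OF s nn])
    qed
    then show ?thesis using s u suminf_nonneg[OF s nn] by blast
  next
    case False
    define c where "c n = (-z)^n * b n" for n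
    have cp: "0 \<le> c n" for n using False bp[of n] by (simp add: c_def)
    have cm: "c (Suc n) \<le> c n" for n
    proof -
      have pd: "(-z)^(Suc n) \<le> (-z)^n" using False z by (intro power_decreasing) auto
      have "(-z)^(Suc n) * b (Suc n) \<le> (-z)^n * b (Suc n)"
        using bp[of "Suc n"] by (intro mult_right_mono[OF pd])
      also have "\<dots> \<le> (-z)^n * b n" using False bm[of n] by (intro mult_left_mono) auto
      finally show ?thesis by (simp add: c_def)
    qed
    have cl: "c \<longlonglongrightarrow> 0"
    proof (rule real_tendsto_sandwich[OF _ _ tendsto_const bl])
      show "\<forall>\<^sub>F n in sequentially. 0 \<le> c n" using cp by auto
      have "c n \<le> b n" for n
      proof -
        have "(-z)^n \<le> 1" using False z by (intro power_le_one) auto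
        then show ?thesis using bp[of n] unfolding c_def using mult_right_mono[of "(-z)^n" 1 "b n"] by simp
      qed
      then show "\<forall>\<^sub>F n in sequentially. c n \<le> b n" by auto
    qed
    have eq: "z^n * b n = (-1)^n * c n" for n
      by (simp add: c_def power_minus[symmetric])
    note L = summable_Leibniz'[OF cl cp cm]
    have s: "summable (\<lambda>n. z^n * b n)" using L(1) by (simp add: eq)
    have lo: "c 0 - c 1 \<le> (\<Sum>n. z^n * b n)" using L(2)[of 1] by (simp add: eq numeral_2_eq_2)
    have hi: "(\<Sum>n. z^n * b n) \<le> c 0" using L(4)[of 0] by (simp add: eq)
    have "b 1 < b 0 \<longrightarrow> c 1 < c 0"
      using False z bp[of 1] mult_right_mono[of "-z" 1 "b 1"] by (auto simp: c_def)
    then show ?thesis using s lo hi cm[of 0] False by (auto simp: c_def)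
  qed
  then show "summable (\<lambda>n. z^n * b n)" "0 \<le> (\<Sum>n. z^n * b n)"
    "(\<Sum>n. z^n * b n) \<le> b 0 / (1 - max z 0)"
    "b 1 < b 0 \<Longrightarrow> 0 < (\<Sum>n. z^n * b n)" by auto
qed



lemma tel_ineq:
  fixes s x :: real assumes s: "s > 1" and x: "x > 0"
  shows "(x + 1) powr (-s) \<le> (x powr (1 - s) - (x + 1) powr (1 - s)) / (s - 1)"
proof -
  have "\<exists>t. x < t \<and> t < x + 1 \<and> (x+1) powr (1-s) - x powr (1-s) = ((x+1) - x) * ((1-s) * t powr (1-s-1))"
    apply (rule MVT2)
    using x apply simp
    subgoal for y using has_real_derivative_powr[of y "1-s"] x by simp
    done
  then obtain t where t: "x < t" "t < x + 1" "(x+1) powr (1-s) - x powr (1-s) = (1-s) * t powr (-s)"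
    by auto
  have "(x + 1) powr (-s) \<le> t powr (-s)"
    using t x s by (intro powr_mono2') auto
  then have "(s-1) * (x + 1) powr (-s) \<le> (s-1) * t powr (-s)" using s by simp
  also have "\<dots> = x powr (1 - s) - (x + 1) powr (1 - s)" using t(3) by (simp add: algebra_simps)
  finally show ?thesis using s by (simp add: field_simps)
qed

lemma tel:
  fixes s c :: real assumes s: "s > 1" and c: "c > 0"
  shows "summable (\<lambda>n. (real n + c + 1) powr (-s))"
    "(\<Sum>n. (real n + c + 1) powr (-s)) \<le> c powr (1 - s) / (s - 1)"
proof -
  define h where "h n = (real n + c) powr (1 - s) / (s - 1)" for n
  have l0: "(\<lambda>n. (real n + c) powr (1 - s)) \<longlonglongrightarrow> 0"
    using lim_powr0[of "s - 1" c] s by simp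
  have "h \<longlonglongrightarrow> 0 / (s - 1)" unfolding h_def
    by (rule tendsto_divide[OF l0 tendsto_const]) (use s in simp)
  then have hs: "(\<lambda>n. h n - h (Suc n)) sums (h 0 - 0)" by (intro telescope_sums') simp
  have le: "(real n + c + 1) powr (-s) \<le> h n - h (Suc n)" for n
  proof -
    have e: "real (Suc n) + c = real n + c + 1" by simp
    have "(real n + c + 1) powr (-s) \<le> ((real n + c) powr (1-s) - (real n + c + 1) powr (1-s))/(s-1)"
      by (rule tel_ineq[OF s]) (use c in simp)
    then show ?thesis unfolding h_def e diff_divide_distrib .
  qed
  have nn: "0 \<le> (real n + c + 1) powr (-s)" for n by simp
  show sm: "summable (\<lambda>n. (real n + c + 1) powr (-s))"
    by (rule summable_comparison_test[OF _ sums_summable[OF hs]]) (use le in auto)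
  have "(\<Sum>n. (real n + c + 1) powr (-s)) \<le> (\<Sum>n. h n - h (Suc n))"
    by (rule suminf_le[OF le sm sums_summable[OF hs]])
  also have "\<dots> = h 0" using hs by (simp add: sums_iff)
  finally show "(\<Sum>n. (real n + c + 1) powr (-s)) \<le> c powr (1 - s) / (s - 1)" by (simp add: h_def)
qed

lemma convex_step:
  fixes s x :: real assumes s: "s > 0" and x: "x > 0"
  shows "(x + 1) powr (-s) - (x + 2) powr (-s) \<le> x powr (-s) - (x + 1) powr (-s)"
proof -
  define f where "f y = y powr (-s) - (y + 1) powr (-s)" for y
  have "f (x + 1) \<le> f x"
  proof (rule DERIV_nonpos_imp_nonincreasing[of x "x+1" f])
    show "x \<le> x + 1" by simp
  next
    fix y assume y: "x \<le> y" "y \<le> x + 1"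
    have d: "DERIV f y :> (-s) * y powr (-s-1) - (-s) * (y+1) powr (-s-1)"
      unfolding f_def using x y
      by (auto intro!: derivative_eq_intros has_real_derivative_powr[THEN DERIV_chain2]
           simp: has_real_derivative_powr)
    have "(y+1) powr (-s-1) \<le> y powr (-s-1)" using x y s by (intro powr_mono2') auto
    then have "(-s) * y powr (-s-1) - (-s) * (y+1) powr (-s-1) \<le> 0" using s
      by (simp add: algebra_simps mult_left_mono)
    then show "\<exists>d. DERIV f y :> d \<and> d \<le> 0" using d by blast
  qed
  then show ?thesis by (simp add: f_def add.assoc)
qed



definition TT :: "real \<Rightarrow> real \<Rightarrow> real \<Rightarrow> nat \<Rightarrow> real" where
  "TT a s z m = (\<Sum>n. z^n / (real m + real n + 1 + a) powr s)"

lemma TT1: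
  fixes a s :: real assumes a: "a > 0" and s: "s > 1"
  shows "summable (\<lambda>n. 1^n / (real m + real n + 1 + a) powr s)"
    "0 < TT a s 1 m" "TT a s 1 m \<le> (real m + a) powr (1 - s) / (s - 1)"
    "TT a s 1 (Suc m) \<le> TT a s 1 m" "(\<lambda>m. TT a s 1 m) \<longlonglongrightarrow> 0"
proof -
  have eq: "1^n / (real m + real n + 1 + a) powr s = (real n + (real m + a) + 1) powr (-s)" for n m
    by (simp add: powr_minus divide_inverse add_ac)
  have cp: "real m + a > 0" for m using a by simp
  have sm: "summable (\<lambda>n. 1^n / (real m + real n + 1 + a) powr s)" for m
    unfolding eq using tel(1)[OF s cp] .
  show "summable (\<lambda>n. 1^n / (real m + real n + 1 + a) powr s)" by (rule sm)
  have ub: "TT a s 1 m \<le> (real m + a) powr (1 - s) / (s - 1)" for m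
    unfolding TT_def eq using tel(2)[OF s cp] .
  show "TT a s 1 m \<le> (real m + a) powr (1 - s) / (s - 1)" by (rule ub)
  show "0 < TT a s 1 m" unfolding TT_def
    by (rule suminf_pos[OF sm]) (use a in simp)
  have "TT a s 1 (Suc m) = (\<Sum>n. 1^(Suc n) / (real m + real (Suc n) + 1 + a) powr s)"
    unfolding TT_def by (simp add: add_ac)
  also have "\<dots> = TT a s 1 m - 1 / (real m + 1 + a) powr s"
    unfolding TT_def using suminf_split_head[OF sm[of m]] by simp
  also have "\<dots> \<le> TT a s 1 m" by simp
  finally show "TT a s 1 (Suc m) \<le> TT a s 1 m" .
  have pos: "0 < TT a s 1 m" for m unfolding TT_def
    by (rule suminf_pos[OF sm]) (use a in simp)
  have l0: "(\<lambda>m. (real m + a) powr (1 - s)) \<longlonglongrightarrow> 0"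
    using lim_powr0[of "s - 1" a] s by simp
  have l1: "(\<lambda>m. (real m + a) powr (1 - s) / (s - 1)) \<longlonglongrightarrow> 0"
    using tendsto_divide[OF l0 tendsto_const, of "s - 1"] s by simp
  have e1: "\<forall>\<^sub>F m in sequentially. 0 \<le> TT a s 1 m" using pos by (simp add: less_imp_le)
  have e2: "\<forall>\<^sub>F m in sequentially. TT a s 1 m \<le> (real m + a) powr (1 - s) / (s - 1)"
    using ub by simp
  show "(\<lambda>m. TT a s 1 m) \<longlonglongrightarrow> 0"
    by (rule real_tendsto_sandwich[OF e1 e2 tendsto_const l1])
qed

lemma TT2:
  fixes a s z :: real assumes a: "a > 0" and s: "s > 0" and z: "-1 \<le> z" "z < 1"
  shows "summable (\<lambda>n. z^n / (real m + real n + 1 + a) powr s)"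
    "0 < TT a s z m" "TT a s z m \<le> (real m + 1 + a) powr (-s) / (1 - max z 0)"
    "TT a s z (Suc m) \<le> TT a s z m" "(\<lambda>m. TT a s z m) \<longlonglongrightarrow> 0"
proof -
  define b where "b m n = (real n + (real m + 1 + a)) powr (-s)" for m n :: nat
  have eq: "z^n / (real m + real n + 1 + a) powr s = z^n * b m n" for n m
    by (simp add: powr_minus divide_inverse add_ac b_def)
  have bp: "0 \<le> b m n" for m n by (simp add: b_def)
  have bm: "b m (Suc n) \<le> b m n" for m n
    unfolding b_def using a s by (intro powr_mono2') auto
  have bs: "b m 1 < b m 0" for m
    unfolding b_def using a s by (intro powr_less_mono2_neg) auto
  have bl: "b m \<longlonglongrightarrow> 0" for m unfolding b_def using lim_powr0[OF s] .
  note G = geomalt[OF z bp bm bl]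
  have sm: "summable (\<lambda>n. z^n / (real m + real n + 1 + a) powr s)" for m
    unfolding eq by (rule G(1))
  then show "summable (\<lambda>n. z^n / (real m + real n + 1 + a) powr s)" .
  have pos: "0 < TT a s z m" for m unfolding TT_def eq by (rule G(4)[OF bs])
  then show "0 < TT a s z m" .
  have ub: "TT a s z m \<le> (real m + 1 + a) powr (-s) / (1 - max z 0)" for m
    unfolding TT_def eq using G(3)[of m] by (simp add: b_def)
  then show "TT a s z m \<le> (real m + 1 + a) powr (-s) / (1 - max z 0)" .
  have bsuc: "b (Suc m) n = b m (Suc n)" for m n by (simp add: b_def add_ac)
  define d where "d n = b m n - b m (Suc n)" for n
  have dp: "0 \<le> d n" for n using bm[of m n] by (simp add: d_def)
  have dm: "d (Suc n) \<le> d n" for n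
    using convex_step[OF s, of "real n + (real m + 1 + a)"] a
    by (simp add: d_def b_def add_ac numeral_2_eq_2)
  have dl: "d \<longlonglongrightarrow> 0" unfolding d_def
    using tendsto_diff[OF bl[of m] LIMSEQ_Suc[OF bl[of m]]] by simp
  have s1: "summable (\<lambda>n. z^n * b m n)" by (rule G(1))
  have s2: "summable (\<lambda>n. z^n * b m (Suc n))"
    using G(1)[of "Suc m"] by (simp add: bsuc)
  have "TT a s z m - TT a s z (Suc m) = (\<Sum>n. z^n * b m n) - (\<Sum>n. z^n * b m (Suc n))"
    unfolding TT_def eq by (simp add: bsuc)
  also have "\<dots> = (\<Sum>n. z^n * d n)"
    using suminf_diff[OF s1 s2] by (simp add: d_def algebra_simps)
  also have "\<dots> \<ge> 0" by (rule geomalt(2)[OF z dp dm dl])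
  finally show "TT a s z (Suc m) \<le> TT a s z m" by simp
  have l0: "(\<lambda>m. (real m + 1 + a) powr (-s)) \<longlonglongrightarrow> 0"
    using lim_powr0[OF s, of "1 + a"] by (simp add: add.assoc)
  have l1: "(\<lambda>m. (real m + 1 + a) powr (-s) / (1 - max z 0)) \<longlonglongrightarrow> 0"
    using tendsto_divide[OF l0 tendsto_const, of "1 - max z 0"] z by simp
  have e1: "\<forall>\<^sub>F m in sequentially. 0 \<le> TT a s z m" using pos by (simp add: less_imp_le)
  have e2: "\<forall>\<^sub>F m in sequentially. TT a s z m \<le> (real m + 1 + a) powr (-s) / (1 - max z 0)"
    using ub by simp
  show "(\<lambda>m. TT a s z m) \<longlonglongrightarrow> 0"
    by (rule real_tendsto_sandwich[OF e1 e2 tendsto_const l1])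
qed



lemma cpow_real:
  fixes x s :: real assumes "x \<ge> 0"
  shows "(of_real x :: complex) powr (of_real s) = of_real (x powr s)"
  using powr_of_real[OF assms] .

lemma Phi2_real:
  fixes a s1 s2 z1 z2 :: real assumes a: "a > 0"
    and si: "\<And>m. summable (\<lambda>n. z2^n / (real m + real n + 1 + a) powr s2)"
    and so: "summable (\<lambda>m. z1^m / (real m + a) powr s1 * TT a s2 z2 m)"
  shows "Phi2 (of_real s1) (of_real s2) a (of_real z1) (of_real z2) =
    of_real (\<Sum>m. z1^m / (real m + a) powr s1 * TT a s2 z2 m)"
proof -
  have i: "(of_real z2 :: complex) ^ n / (of_nat m + of_nat n + 1 + of_real a) powr of_real s2
      = of_real (z2^n / (real m + real n + 1 + a) powr s2)" for m n
  proof -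
    have "(of_nat m + of_nat n + 1 + of_real a :: complex) = of_real (real m + real n + 1 + a)" by simp
    then show ?thesis using a cpow_real[of "real m + real n + 1 + a" s2] by simp
  qed
  have ii: "(\<Sum>n. (of_real z2 :: complex) ^ n / (of_nat m + of_nat n + 1 + of_real a) powr of_real s2)
      = of_real (TT a s2 z2 m)" for m
    unfolding i TT_def by (rule suminf_of_real[OF si[of m], symmetric])
  have o: "(of_real z1 :: complex) ^ m / (of_nat m + of_real a) powr of_real s1 *
      (\<Sum>n. (of_real z2 :: complex) ^ n / (of_nat m + of_nat n + 1 + of_real a) powr of_real s2)
      = of_real (z1^m / (real m + a) powr s1 * TT a s2 z2 m)" for m
  proof -
    have "(of_nat m + of_real a :: complex) = of_real (real m + a)" by simp
    then show ?thesis unfolding ii using a cpow_real[of "real m + a" s1] by simp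
  qed
  show ?thesis unfolding Phi2_def o by (rule suminf_of_real[OF so, symmetric])
qed

lemma outer_alt:
  fixes a s1 z1 :: real and T :: "nat \<Rightarrow> real"
  assumes a: "a > 0" and s1: "s1 > 0" and z: "-1 \<le> z1" "z1 < 1"
    and Tp: "\<And>m. 0 < T m" and Tm: "\<And>m. T (Suc m) \<le> T m" and Tl: "T \<longlonglongrightarrow> 0"
  shows "summable (\<lambda>m. z1^m / (real m + a) powr s1 * T m)"
    "0 < (\<Sum>m. z1^m / (real m + a) powr s1 * T m)"
proof -
  define b where "b m = (real m + a) powr (-s1) * T m" for m
  have eq: "z1^m / (real m + a) powr s1 * T m = z1^m * b m" for m
    by (simp add: b_def powr_minus divide_inverse)
  have bp: "0 \<le> b m" for m using Tp[of m] by (simp add: b_def)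
  have pm: "(real (Suc m) + a) powr (-s1) \<le> (real m + a) powr (-s1)" for m
    using a s1 by (intro powr_mono2') auto
  have bm: "b (Suc m) \<le> b m" for m
    unfolding b_def using pm[of m] Tm[of m] Tp[of "Suc m"]
    by (intro mult_mono) auto
  have bl: "b \<longlonglongrightarrow> 0" unfolding b_def
    using tendsto_mult[OF lim_powr0[OF s1, of a] Tl] by simp
  have p1: "(1 + a) powr (-s1) < a powr (-s1)"
    using a s1 by (intro powr_less_mono2_neg) auto
  have "b 1 \<le> (1 + a) powr (-s1) * T 0" unfolding b_def
    using Tm[of 0] by (simp add: mult_left_mono)
  also have "\<dots> < a powr (-s1) * T 0" using p1 Tp[of 0] by simp
  finally have bs: "b 1 < b 0" by (simp add: b_def)
  note G = geomalt[OF z bp bm bl]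
  show "summable (\<lambda>m. z1^m / (real m + a) powr s1 * T m)" unfolding eq by (rule G(1))
  show "0 < (\<Sum>m. z1^m / (real m + a) powr s1 * T m)" unfolding eq by (rule G(4)[OF bs])
qed



lemma summable_shift_powr:
  fixes a p :: real assumes a: "a > 0" and p: "p > 1"
  shows "summable (\<lambda>m. (real m + a) powr (-p))"
proof -
  have "summable (\<lambda>m. (real m + a + 1) powr (-p))" by (rule tel(1)[OF p a])
  then have "summable (\<lambda>m. (real (Suc m) + a) powr (-p))" by (simp add: add_ac)
  then show ?thesis by (rule summable_Suc_iff[THEN iffD1])
qed

lemma pos_real_of_real: "pos_real (of_real x) \<longleftrightarrow> x > 0"
  by (simp add: pos_real_def)

theorem lemma3p7:
  fixes a :: real
  assumes "0 < a" and "a \<le> 1"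
  shows
    "(\<forall>\<sigma>1 \<sigma>2 :: real. \<sigma>1 > 0 \<and> \<sigma>2 > 1 \<and> \<sigma>1 + \<sigma>2 > 2 \<longrightarrow>
        pos_real (Phi2 (of_real \<sigma>1) (of_real \<sigma>2) a 1 1))
   \<and> (\<forall>z2 \<sigma>1 \<sigma>2 :: real. -1 \<le> z2 \<and> z2 < 1 \<and> z2 \<noteq> 0 \<and> \<sigma>1 > 1 \<and> \<sigma>2 > 0 \<longrightarrow>
        pos_real (Phi2 (of_real \<sigma>1) (of_real \<sigma>2) a 1 (of_real z2)))
   \<and> (\<forall>z1 \<sigma>1 \<sigma>2 :: real. -1 \<le> z1 \<and> z1 < 1 \<and> z1 \<noteq> 0 \<and> \<sigma>1 > 0 \<and> \<sigma>2 > 1 \<longrightarrow>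
        pos_real (Phi2 (of_real \<sigma>1) (of_real \<sigma>2) a (of_real z1) 1))
   \<and> (\<forall>z1 z2 \<sigma>1 \<sigma>2 :: real. -1 \<le> z1 \<and> z1 < 1 \<and> z1 \<noteq> 0 \<and> -1 \<le> z2 \<and> z2 < 1 \<and> z2 \<noteq> 0
        \<and> \<sigma>1 > 0 \<and> \<sigma>2 > 0 \<longrightarrow>
        pos_real (Phi2 (of_real \<sigma>1) (of_real \<sigma>2) a (of_real z1) (of_real z2)))"
proof (intro conjI allI impI)
  have a: "a > 0" by fact
  fix s1 s2 :: real
  assume h: "s1 > 0 \<and> s2 > 1 \<and> s1 + s2 > 2"
  then have s1: "s1 > 0" and s2: "s2 > 1" and ss: "s1 + s2 - 1 > 1" by auto
  define f where "f m = 1^m / (real m + a) powr s1 * TT a s2 1 m" for m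
  have fp: "0 < f m" for m using TT1(2)[OF a s2, of m] a by (simp add: f_def)
  have fle: "f m \<le> (real m + a) powr (-(s1 + s2 - 1)) / (s2 - 1)" for m
  proof -
    have "f m = (real m + a) powr (-s1) * TT a s2 1 m" by (simp add: f_def powr_minus divide_inverse)
    also have "\<dots> \<le> (real m + a) powr (-s1) * ((real m + a) powr (1 - s2) / (s2 - 1))"
      by (intro mult_left_mono TT1(3)[OF a s2]) auto
    also have "\<dots> = (real m + a) powr (-(s1 + s2 - 1)) / (s2 - 1)"
      using a by (simp add: powr_add[symmetric] algebra_simps)
    finally show ?thesis .
  qed
  have gs: "summable (\<lambda>m. (real m + a) powr (-(s1 + s2 - 1)) / (s2 - 1))"
    by (intro summable_divide summable_shift_powr[OF a ss])
  have fs: "summable f"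
    by (rule summable_comparison_test'[OF gs, of 0]) (use fp fle in \<open>auto simp: abs_of_pos\<close>)
  have "0 < suminf f" by (rule suminf_pos[OF fs fp])
  then show "pos_real (Phi2 (of_real s1) (of_real s2) a 1 1)"
    using Phi2_real[OF a TT1(1)[OF a s2] fs[unfolded f_def]] unfolding f_def by (simp add: pos_real_of_real)
next
  have a: "a > 0" by fact
  fix z2 s1 s2 :: real
  assume h: "-1 \<le> z2 \<and> z2 < 1 \<and> z2 \<noteq> 0 \<and> s1 > 1 \<and> s2 > 0"
  then have z: "-1 \<le> z2" "z2 < 1" and s1: "s1 > 1" and s2: "s2 > 0" by auto
  define K where "K = 1 / (1 - max z2 0)"
  have K: "K > 0" using z by (simp add: K_def)
  define f where "f m = 1^m / (real m + a) powr s1 * TT a s2 z2 m" for m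
  have fp: "0 < f m" for m using TT2(2)[OF a s2 z, of m] a by (simp add: f_def)
  have Tle: "TT a s2 z2 m \<le> K" for m
  proof -
    have "(real m + 1 + a) powr (-s2) \<le> 1 powr (-s2)"
      using a s2 by (intro powr_mono2') auto
    then have "(real m + 1 + a) powr (-s2) / (1 - max z2 0) \<le> 1 / (1 - max z2 0)"
      using z by (intro divide_right_mono) auto
    then show ?thesis using TT2(3)[OF a s2 z, of m] by (simp add: K_def)
  qed
  have fle: "f m \<le> K * (real m + a) powr (-s1)" for m
  proof -
    have "f m = (real m + a) powr (-s1) * TT a s2 z2 m" by (simp add: f_def powr_minus divide_inverse)
    also have "\<dots> \<le> (real m + a) powr (-s1) * K"
      by (intro mult_left_mono Tle) auto
    finally show ?thesis by (simp add: mult.commute)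
  qed
  have gs: "summable (\<lambda>m. K * (real m + a) powr (-s1))"
    by (intro summable_mult summable_shift_powr[OF a s1])
  have fs: "summable f"
    by (rule summable_comparison_test'[OF gs, of 0]) (use fp fle in \<open>auto simp: abs_of_pos\<close>)
  have "0 < suminf f" by (rule suminf_pos[OF fs fp])
  then show "pos_real (Phi2 (of_real s1) (of_real s2) a 1 (of_real z2))"
    using Phi2_real[OF a TT2(1)[OF a s2 z] fs[unfolded f_def]] unfolding f_def by (simp add: pos_real_of_real)
next
  have a: "a > 0" by fact
  fix z1 s1 s2 :: real
  assume h: "-1 \<le> z1 \<and> z1 < 1 \<and> z1 \<noteq> 0 \<and> s1 > 0 \<and> s2 > 1"
  then have z: "-1 \<le> z1" "z1 < 1" and s1: "s1 > 0" and s2: "s2 > 1" by auto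
  note O = outer_alt[OF a s1 z TT1(2)[OF a s2] TT1(4)[OF a s2] TT1(5)[OF a s2]]
  show "pos_real (Phi2 (of_real s1) (of_real s2) a (of_real z1) 1)"
    using Phi2_real[OF a TT1(1)[OF a s2] O(1)] O(2) by (simp add: pos_real_of_real)
next
  have a: "a > 0" by fact
  fix z1 z2 s1 s2 :: real
  assume h: "-1 \<le> z1 \<and> z1 < 1 \<and> z1 \<noteq> 0 \<and> -1 \<le> z2 \<and> z2 < 1 \<and> z2 \<noteq> 0 \<and> s1 > 0 \<and> s2 > 0"
  then have z1: "-1 \<le> z1" "z1 < 1" and z2: "-1 \<le> z2" "z2 < 1" and s1: "s1 > 0" and s2: "s2 > 0" by auto
  note O = outer_alt[OF a s1 z1 TT2(2)[OF a s2 z2] TT2(4)[OF a s2 z2] TT2(5)[OF a s2 z2]]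
  show "pos_real (Phi2 (of_real s1) (of_real s2) a (of_real z1) (of_real z2))"
    using Phi2_real[OF a TT2(1)[OF a s2 z2] O(1)] O(2) by (simp add: pos_real_of_real)
qed

end
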